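(* There exist constants $c<1$ and $\alpha\in(0,1)$ such that the following holds asymptotically as $j\to\infty$: for every integer $m$ with $m=\omega(1)$ and $m\le\sqrt{j}$, $$\sum_{m'=-j}^{j}\bigl|d^j_{m'm}(\beta_m)\bigr|^2\,\frac{M'^{\alpha}}{M^{\alpha}}<c,$$ where $\beta_m=\arcsin(m/j)$, $M=\min(|m|,\sqrt{j}+1)$ and $M'=\min(|m'|,\sqrt{j}+1)$.
   Context: For spin quantum number $j$, let $J_y,J_z$ be the spin-$j$ angular momentum operators on the $(2j+1)$-dimensional space with orthonormal $J_z$-eigenbasis $|j,m\rangle$, $m\in\{-j,\dots,j\}$ (standard Condon–Shortley phase convention). The Wigner $d$-matrix elements are $d^j_{m'm}(\beta)=\langle j,m'|e^{-i\beta J_y}|j,m\rangle$; $|d^j_{m'm}(\beta)|^2$ is the probability of obtaining $J_z$-outcome $m'$ after rotating $|j,m\rangle$ by $e^{-i\beta J_y}$. The quantities $M,M'$ are proxies for $|m|,|m'|$ that saturate at $\sqrt{j}+1$ (corresponding to a reset whenever $|m'|>\sqrt{j}$). *)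

theory Defs
  imports "HOL-Analysis.Analysis"
begin

text \<open>Spin-j representation for integer spin j (j :: nat), basis |j,m>, m in {-j..j}.
  Operators are represented as matrices indexed by pairs of integers in {-j..j}.\<close>

definition mrange :: "nat \<Rightarrow> int set" where
  "mrange j = {- int j .. int j}"

text \<open>Matrix elements <j,a| J_y |j,b> in the Condon--Shortley convention:
  J_y = (J_+ - J_-)/(2i), J_+|j,b> = sqrt(j(j+1)-b(b+1)) |j,b+1>,
  J_-|j,b> = sqrt(j(j+1)-b(b-1)) |j,b-1>.\<close>
definition Jy :: "nat \<Rightarrow> int \<Rightarrow> int \<Rightarrow> complex" where
  "Jy j a b =
     (if a \<in> mrange j \<and> b \<in> mrange j then
        (if a = b + 1 then
           complex_of_real (sqrt (real j * (real j + 1) - real_of_int b * (real_of_int b + 1))) / (2 * \<i>)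
         else if a = b - 1 then
           - complex_of_real (sqrt (real j * (real j + 1) - real_of_int b * (real_of_int b - 1))) / (2 * \<i>)
         else 0)
      else 0)"

fun Jy_pow :: "nat \<Rightarrow> nat \<Rightarrow> int \<Rightarrow> int \<Rightarrow> complex" where
  "Jy_pow j 0 a b = (if a \<in> mrange j \<and> a = b then 1 else 0)"
| "Jy_pow j (Suc n) a b = (\<Sum>k\<in>mrange j. Jy j a k * Jy_pow j n k b)"

text \<open>Wigner d-matrix element d^j_{m'm}(beta) = <j,m'| exp(-i beta J_y) |j,m>,
  with the matrix exponential given by its defining power series.\<close>
definition wigner_d :: "nat \<Rightarrow> int \<Rightarrow> int \<Rightarrow> real \<Rightarrow> complex" where
  "wigner_d j m' m \<beta> =
     (\<Sum>n. ((- \<i> * complex_of_real \<beta>) ^ n / of_nat (fact n)) * Jy_pow j n m' m)"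

definition Msat :: "nat \<Rightarrow> int \<Rightarrow> real" where
  "Msat j m = min (real_of_int \<bar>m\<bar>) (sqrt (real j) + 1)"

definition lemma3_sum :: "real \<Rightarrow> nat \<Rightarrow> int \<Rightarrow> real" where
  "lemma3_sum \<alpha> j m =
     (\<Sum>m'\<in>mrange j.
        (cmod (wigner_d j m' m (arcsin (real_of_int m / real j))))\<^sup>2 *
        (Msat j m' powr \<alpha>) / (Msat j m powr \<alpha>))"

end

theory Submission
  imports Defs "HOL-Real_Asymp.Real_Asymp"
begin


type_synonym cmat = "int \<Rightarrow> int \<Rightarrow> complex"

definition mm :: "nat \<Rightarrow> cmat \<Rightarrow> cmat \<Rightarrow> cmat" where
  "mm j A B = (\<lambda>a b. \<Sum>k\<in>mrange j. A a k * B k b)"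

definition supp :: "nat \<Rightarrow> cmat \<Rightarrow> bool" where
  "supp j A \<longleftrightarrow> (\<forall>a b. (a \<notin> mrange j \<or> b \<notin> mrange j) \<longrightarrow> A a b = 0)"

lemma finite_mrange[simp]: "finite (mrange j)"
  by (simp add: mrange_def)

lemma card_mrange: "card (mrange j) = 2 * j + 1"
  by (simp add: mrange_def)

lemma mm_assoc: "mm j (mm j A B) C = mm j A (mm j B C)"
  unfolding mm_def
  by (auto simp: sum_distrib_left sum_distrib_right mult.assoc intro!: ext sum.swap[THEN trans])

lemma Jy_out: "a \<notin> mrange j \<or> b \<notin> mrange j \<Longrightarrow> Jy j a b = 0"
  by (auto simp: Jy_def)

lemma supp_Jy: "supp j (Jy j)"
  by (simp add: supp_def Jy_out)

lemma Jy_pow_Suc: "Jy_pow j (Suc n) = mm j (Jy j) (Jy_pow j n)"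
  by (intro ext) (simp add: mm_def)

lemma Jy_pow_0: "Jy_pow j 0 a b = (if a \<in> mrange j \<and> a = b then 1 else 0)"
  by simp

declare Jy_pow.simps[simp del]

lemma supp_Jy_pow: "supp j (Jy_pow j n)"
proof (induction n)
  case 0 then show ?case by (auto simp: supp_def Jy_pow_0)
next
  case (Suc n) then show ?case
    by (auto simp: supp_def Jy_out Jy_pow_Suc mm_def intro!: sum.neutral)
qed

lemma supp_mm: "supp j A \<Longrightarrow> supp j B \<Longrightarrow> supp j (mm j A B)"
  by (auto simp: supp_def mm_def intro!: sum.neutral)

lemma mm_id_left: "supp j A \<Longrightarrow> mm j (Jy_pow j 0) A = A"
proof (intro ext)
  fix a b assume A: "supp j A"
  have "mm j (Jy_pow j 0) A a b = (\<Sum>k\<in>mrange j. if k = a then (if a \<in> mrange j then A a b else 0) else 0)"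
    unfolding mm_def Jy_pow_0 by (rule sum.cong) auto
  also have "\<dots> = A a b" using A by (simp add: supp_def)
  finally show "mm j (Jy_pow j 0) A a b = A a b" .
qed

lemma mm_id_right: "supp j A \<Longrightarrow> mm j A (Jy_pow j 0) = A"
proof (intro ext)
  fix a b assume A: "supp j A"
  have "mm j A (Jy_pow j 0) a b = (\<Sum>k\<in>mrange j. if k = b then (if b \<in> mrange j then A a b else 0) else 0)"
    unfolding mm_def Jy_pow_0 by (rule sum.cong) auto
  also have "\<dots> = A a b" using A by (simp add: supp_def)
  finally show "mm j A (Jy_pow j 0) a b = A a b" .
qed

lemma Jy_pow_add: "mm j (Jy_pow j p) (Jy_pow j q) = Jy_pow j (p + q)"
proof (induction p)
  case 0 then show ?case by (simp add: mm_id_left supp_Jy_pow)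
next
  case (Suc p) then show ?case by (simp add: Jy_pow_Suc mm_assoc)
qed

lemma Jy_pow_Suc': "mm j (Jy_pow j n) (Jy j) = Jy_pow j (Suc n)"
proof -
  have "Jy j = Jy_pow j 1"
    by (simp add: Jy_pow_Suc mm_id_right supp_Jy)
  then show ?thesis by (simp add: Jy_pow_add)
qed


lemma Jy_herm: "cnj (Jy j a b) = Jy j b a"
  unfolding Jy_def
  by (auto simp: algebra_simps)

lemma Jy_pow_herm: "cnj (Jy_pow j n a b) = Jy_pow j n b a"
proof (induction n arbitrary: a b)
  case 0 then show ?case by (auto simp: Jy_pow_0)
next
  case (Suc n)
  have "cnj (Jy_pow j (Suc n) a b) = (\<Sum>k\<in>mrange j. Jy_pow j n b k * Jy j k a)"
    by (simp add: Jy_pow_Suc mm_def Jy_herm Suc mult.commute)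
  also have "\<dots> = mm j (Jy_pow j n) (Jy j) b a" by (simp add: mm_def)
  finally show ?case by (simp add: Jy_pow_Suc')
qed

lemma Jy_bound: "cmod (Jy j a b) \<le> real j + 1"
proof -
  have key: "\<bar>sqrt (real j * (real j + 1) - x)\<bar> \<le> 2 * (real j + 1)"
    if "0 \<le> x" "x \<le> real j * (real j + 1)" for x
  proof -
    have "\<bar>sqrt (real j * (real j + 1) - x)\<bar> = sqrt (real j * (real j + 1) - x)"
      using that by simp
    also have "\<dots> \<le> sqrt ((real j + 1)^2)"
      using that by (intro real_sqrt_le_mono) (auto simp: power2_eq_square algebra_simps)
    also have "\<dots> \<le> 2 * (real j + 1)" by simp
    finally show ?thesis .
  qed
  have h1: "0 \<le> real_of_int b * (real_of_int b + 1)" for b :: int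
  proof -
    have "0 \<le> b * (b + 1)" by (cases "b \<ge> 0") (auto simp: mult_nonneg_nonneg mult_nonpos_nonpos)
    then show ?thesis by (metis of_int_0_le_iff of_int_1 of_int_add of_int_mult)
  qed
  have h2: "0 \<le> real_of_int b * (real_of_int b - 1)" for b :: int
  proof -
    have "0 \<le> b * (b - 1)" by (cases "b \<ge> 1") (auto simp: mult_nonneg_nonneg mult_nonpos_nonpos)
    then show ?thesis by (metis of_int_0_le_iff of_int_1 of_int_diff of_int_mult)
  qed
  have h3: "real_of_int b * (real_of_int b + 1) \<le> real j * (real j + 1)"
    "real_of_int b * (real_of_int b - 1) \<le> real j * (real j + 1)" if "b \<in> mrange j" for b
  proof -
    from that have b: "- real j \<le> real_of_int b" "real_of_int b \<le> real j"
      by (auto simp: mrange_def)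
    define x where "x = real_of_int b"
    have ax: "\<bar>x\<bar> \<le> real j" using b by (auto simp: x_def)
    have e1: "x * (x + 1) \<le> \<bar>x\<bar> * (\<bar>x\<bar> + 1)"
      by (cases "x \<ge> 0") (auto simp: algebra_simps)
    have e2: "x * (x - 1) \<le> \<bar>x\<bar> * (\<bar>x\<bar> + 1)"
      by (cases "x \<ge> 0") (auto simp: algebra_simps)
    have e3: "\<bar>x\<bar> * (\<bar>x\<bar> + 1) \<le> real j * (real j + 1)"
      using ax by (intro mult_mono) auto
    show "real_of_int b * (real_of_int b + 1) \<le> real j * (real j + 1)"
      "real_of_int b * (real_of_int b - 1) \<le> real j * (real j + 1)"
      using e1 e2 e3 unfolding x_def by linarith+
  qed
  show ?thesis
    unfolding Jy_def
    using key[OF h1 h3(1)] key[OF h2 h3(2)]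
    by (auto simp: norm_divide norm_mult algebra_simps)
qed


definition Lj :: "nat \<Rightarrow> real" where "Lj j = (2 * real j + 1) * (real j + 1)"

lemma Lj_nonneg: "0 \<le> Lj j" by (simp add: Lj_def)

lemma Jy_pow_bound: "cmod (Jy_pow j n a b) \<le> Lj j ^ n"
proof (induction n arbitrary: a b)
  case 0 then show ?case by (simp add: Jy_pow_0)
next
  case (Suc n)
  have "cmod (Jy_pow j (Suc n) a b) \<le> (\<Sum>k\<in>mrange j. cmod (Jy j a k) * cmod (Jy_pow j n k b))"
    unfolding Jy_pow_Suc mm_def by (rule order_trans[OF norm_sum]) (simp add: norm_mult)
  also have "\<dots> \<le> (\<Sum>k\<in>mrange j. (real j + 1) * Lj j ^ n)"
    by (intro sum_mono mult_mono Jy_bound Suc) auto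
  also have "\<dots> = Lj j ^ Suc n" by (simp add: card_mrange Lj_def)
  finally show ?case .
qed

definition w :: "real \<Rightarrow> nat \<Rightarrow> complex" where
  "w s n = (- \<i> * complex_of_real s) ^ n / of_nat (fact n)"

lemma wigner_d_w: "wigner_d j a b s = (\<Sum>n. w s n * Jy_pow j n a b)"
  by (simp add: wigner_d_def w_def)

lemma norm_w: "cmod (w s n) = \<bar>s\<bar> ^ n / fact n"
  by (simp add: w_def norm_divide norm_mult norm_power)

lemma summable_expbound:
  fixes f :: "nat \<Rightarrow> complex"
  assumes "\<And>n. cmod (f n) \<le> K * x ^ n / fact n"
  shows "summable (\<lambda>n. cmod (f n))" "summable f"
proof -
  have "summable (\<lambda>n. K * (inverse (fact n) * x ^ n))"
    by (intro summable_mult summable_exp)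
  moreover have "norm (cmod (f n)) \<le> K * (inverse (fact n) * x ^ n)" for n
    using assms[of n] by (simp add: divide_inverse mult_ac)
  ultimately show "summable (\<lambda>n. cmod (f n))"
    by (rule summable_comparison_test'[of "\<lambda>n. K * (inverse (fact n) * x ^ n)" 0])
  then show "summable f" by (rule summable_norm_cancel)
qed

lemma bound_wP: "cmod (w s n * Jy_pow j n a b) \<le> 1 * (\<bar>s\<bar> * Lj j) ^ n / fact n"
proof -
  have "cmod (w s n * Jy_pow j n a b) = \<bar>s\<bar> ^ n / fact n * cmod (Jy_pow j n a b)"
    by (simp add: norm_mult norm_w)
  also have "\<dots> \<le> \<bar>s\<bar> ^ n / fact n * Lj j ^ n"
    by (intro mult_left_mono Jy_pow_bound) auto
  finally show ?thesis by (simp add: power_mult_distrib)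
qed

lemma summable_wP: "summable (\<lambda>n. w s n * Jy_pow j n a b)"
  "summable (\<lambda>n. cmod (w s n * Jy_pow j n a b))"
  using summable_expbound[OF bound_wP] by auto

lemma bound_wPA:
  "cmod (w s n * mm j (Jy_pow j n) A a l) \<le> (\<Sum>k\<in>mrange j. cmod (A k l)) * (\<bar>s\<bar> * Lj j) ^ n / fact n"
proof -
  have "cmod (mm j (Jy_pow j n) A a l) \<le> (\<Sum>k\<in>mrange j. Lj j ^ n * cmod (A k l))"
    unfolding mm_def
    by (rule order_trans[OF norm_sum]) (auto simp: norm_mult intro!: sum_mono mult_right_mono Jy_pow_bound)
  then have "cmod (mm j (Jy_pow j n) A a l) \<le> Lj j ^ n * (\<Sum>k\<in>mrange j. cmod (A k l))"
    by (simp add: sum_distrib_left)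
  then have "cmod (w s n * mm j (Jy_pow j n) A a l) \<le> \<bar>s\<bar> ^ n / fact n * (Lj j ^ n * (\<Sum>k\<in>mrange j. cmod (A k l)))"
    by (simp add: norm_mult norm_w) (intro divide_right_mono mult_left_mono; simp)
  then show ?thesis by (simp add: power_mult_distrib mult_ac)
qed

definition Es :: "nat \<Rightarrow> real \<Rightarrow> cmat" where
  "Es j s = (\<lambda>a b. wigner_d j a b s)"

lemma mm_Es_left: "mm j (Es j s) A a l = (\<Sum>p. w s p * mm j (Jy_pow j p) A a l)"
proof -
  have "mm j (Es j s) A a l = (\<Sum>k\<in>mrange j. \<Sum>p. w s p * Jy_pow j p a k * A k l)"
    unfolding mm_def Es_def wigner_d_w
    by (rule sum.cong[OF refl], rule suminf_mult2, rule summable_wP)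
  also have "\<dots> = (\<Sum>p. \<Sum>k\<in>mrange j. w s p * Jy_pow j p a k * A k l)"
    by (rule suminf_sum[symmetric], rule summable_mult2, rule summable_wP)
  also have "\<dots> = (\<Sum>p. w s p * mm j (Jy_pow j p) A a l)"
    unfolding mm_def by (simp add: sum_distrib_left mult.assoc)
  finally show ?thesis .
qed

lemma triple:
  "mm j (mm j (Es j s) A) (Es j t) a b =
     (\<Sum>n. \<Sum>p\<le>n. w s p * w t (n - p) * mm j (mm j (Jy_pow j p) A) (Jy_pow j (n - p)) a b)"
proof -
  define x where "x l p = w s p * mm j (Jy_pow j p) A a l" for l p
  define y where "y l q = w t q * Jy_pow j q l b" for l q
  have sx: "summable (\<lambda>p. cmod (x l p))" for l
    unfolding x_def by (rule summable_expbound(1)[OF bound_wPA])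
  have sy: "summable (\<lambda>q. cmod (y l q))" for l
    unfolding y_def by (rule summable_wP(2))
  have "mm j (mm j (Es j s) A) (Es j t) a b = (\<Sum>l\<in>mrange j. (\<Sum>p. x l p) * (\<Sum>q. y l q))"
    unfolding mm_def[of j "mm j (Es j s) A"] mm_Es_left x_def y_def
    by (simp add: Es_def wigner_d_w)
  also have "\<dots> = (\<Sum>l\<in>mrange j. \<Sum>n. \<Sum>p\<le>n. x l p * y l (n - p))"
    by (rule sum.cong[OF refl], rule Cauchy_product[OF sx sy])
  also have "\<dots> = (\<Sum>n. \<Sum>l\<in>mrange j. \<Sum>p\<le>n. x l p * y l (n - p))"
    by (rule suminf_sum[symmetric], rule sums_summable[OF Cauchy_product_sums[OF sx sy]])
  also have "\<dots> = (\<Sum>n. \<Sum>p\<le>n. w s p * w t (n - p) * mm j (mm j (Jy_pow j p) A) (Jy_pow j (n - p)) a b)"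
  proof (intro arg_cong[where f=suminf] ext)
    fix n
    have "(\<Sum>l\<in>mrange j. \<Sum>p\<le>n. x l p * y l (n - p)) = (\<Sum>p\<le>n. \<Sum>l\<in>mrange j. x l p * y l (n - p))"
      by (rule sum.swap)
    also have "\<dots> = (\<Sum>p\<le>n. w s p * w t (n - p) * (\<Sum>l\<in>mrange j. mm j (Jy_pow j p) A a l * Jy_pow j (n - p) l b))"
      unfolding x_def y_def by (intro sum.cong refl) (simp add: sum_distrib_left mult_ac)
    finally show "(\<Sum>l\<in>mrange j. \<Sum>p\<le>n. x l p * y l (n - p)) = (\<Sum>p\<le>n. w s p * w t (n - p) * mm j (mm j (Jy_pow j p) A) (Jy_pow j (n - p)) a b)"
      by (simp add: mm_def[of j "mm j (Jy_pow j _) A"])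
  qed
  finally show ?thesis .
qed


lemma w_coef:
  assumes "p \<le> n"
  shows "w s p * w t (n - p) = of_nat (n choose p) * (- \<i> * complex_of_real s) ^ p * (- \<i> * complex_of_real t) ^ (n - p) / of_nat (fact n)"
proof -
  have f: "fact p * fact (n - p) * (n choose p) = (fact n :: nat)"
    using binomial_fact_lemma[OF assms] .
  have f': "of_nat (fact p) * of_nat (fact (n - p)) * of_nat (n choose p) = (of_nat (fact n) :: complex)"
    using arg_cong[OF f, of "of_nat :: nat \<Rightarrow> complex"] by simp
  have fe: "(fact n :: complex) = fact p * (fact (n - p) * of_nat (n choose p))"
    using f' by (simp add: mult.assoc)
  show ?thesis
    unfolding w_def using assms by (simp add: field_simps fe)
qed

lemma pascal_sum:
  fixes g :: "nat \<Rightarrow> nat \<Rightarrow> complex"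
  shows "(\<Sum>p\<le>n. of_nat (n choose p) * (g (Suc p) (n - p) + g p (Suc n - p))) =
         (\<Sum>p\<le>Suc n. of_nat (Suc n choose p) * g p (Suc n - p))"
proof -
  have h1: "(\<Sum>p\<le>Suc n. of_nat (Suc n choose p) * g p (Suc n - p)) =
        g 0 (Suc n) + (\<Sum>p\<le>n. of_nat (Suc n choose Suc p) * g (Suc p) (n - p))"
    by (subst sum.atMost_Suc_shift) simp
  have h2: "(\<Sum>p\<le>n. of_nat (Suc n choose Suc p) * g (Suc p) (n - p)) =
     (\<Sum>p\<le>n. of_nat (n choose p) * g (Suc p) (n - p)) + (\<Sum>p\<le>n. of_nat (n choose Suc p) * g (Suc p) (n - p))"
    by (simp add: sum.distrib algebra_simps)
  have h3: "(\<Sum>p\<le>Suc n. of_nat (n choose p) * g p (Suc n - p)) =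
        g 0 (Suc n) + (\<Sum>p\<le>n. of_nat (n choose Suc p) * g (Suc p) (n - p))"
    by (subst sum.atMost_Suc_shift) simp
  have h4: "(\<Sum>p\<le>Suc n. of_nat (n choose p) * g p (Suc n - p)) = (\<Sum>p\<le>n. of_nat (n choose p) * g p (Suc n - p))"
    by simp
  show ?thesis
    using h1 h2 h3 h4 by (simp add: sum.distrib algebra_simps)
qed

lemma mm_sum_left: "mm j (\<lambda>a b. \<Sum>p\<in>S. f p a b) B a b = (\<Sum>p\<in>S. mm j (f p) B a b)"
  unfolding mm_def by (simp add: sum_distrib_right sum.swap[of _ S])

lemma mm_sum_right: "mm j A (\<lambda>a b. \<Sum>p\<in>S. f p a b) a b = (\<Sum>p\<in>S. mm j A (f p) a b)"
  unfolding mm_def by (simp add: sum_distrib_left sum.swap[of _ S])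

lemma mm_scal_left: "mm j (\<lambda>a b. c * A a b) B a b = c * mm j A B a b"
  unfolding mm_def by (simp add: sum_distrib_left mult.assoc)

lemma mm_scal_right: "mm j A (\<lambda>a b. c * B a b) a b = c * mm j A B a b"
  unfolding mm_def by (simp add: sum_distrib_left mult_ac)

definition ad :: "nat \<Rightarrow> cmat \<Rightarrow> cmat" where
  "ad j B = (\<lambda>a b. \<i> * (mm j (Jy j) B a b - mm j B (Jy j) a b))"

definition Mpq :: "nat \<Rightarrow> cmat \<Rightarrow> nat \<Rightarrow> nat \<Rightarrow> cmat" where
  "Mpq j A p q = mm j (mm j (Jy_pow j p) A) (Jy_pow j q)"

definition Dm :: "nat \<Rightarrow> cmat \<Rightarrow> nat \<Rightarrow> cmat" where
  "Dm j A n = (\<lambda>a b. \<Sum>p\<le>n. of_nat (n choose p) * (\<i> ^ p * (- \<i>) ^ (n - p) * Mpq j A p (n - p) a b))"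

lemma Mpq_left: "mm j (Jy j) (Mpq j A p q) = Mpq j A (Suc p) q"
  unfolding Mpq_def by (simp add: mm_assoc[symmetric] Jy_pow_Suc)

lemma Mpq_right: "mm j (Mpq j A p q) (Jy j) = Mpq j A p (Suc q)"
  unfolding Mpq_def by (simp add: mm_assoc Jy_pow_Suc')

lemma Dm_Suc: "Dm j A (Suc n) = ad j (Dm j A n)"
proof (intro ext)
  fix a b
  define g where "g p q = \<i> ^ p * (- \<i>) ^ q * Mpq j A p q a b" for p q
  have "ad j (Dm j A n) a b = (\<Sum>p\<le>n. of_nat (n choose p) * (g (Suc p) (n - p) + g p (Suc n - p)))"
    unfolding ad_def Dm_def mm_sum_left mm_sum_right mm_scal_left mm_scal_right Mpq_left Mpq_right
    by (simp add: g_def sum_distrib_left algebra_simps Suc_diff_le sum_subtractf[symmetric])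
  also have "\<dots> = Dm j A (Suc n) a b"
    unfolding pascal_sum by (simp add: Dm_def g_def)
  finally show "Dm j A (Suc n) a b = ad j (Dm j A n) a b" by simp
qed

lemma Dm_0: "supp j A \<Longrightarrow> Dm j A 0 = A"
  unfolding Dm_def Mpq_def by (simp add: mm_id_left mm_id_right supp_mm supp_Jy_pow)


lemma supp_Es: "supp j (Es j s)"
  unfolding supp_def Es_def wigner_d_w
  using supp_Jy_pow[of j] by (auto simp: supp_def)

lemma Mpq_id: "Mpq j (Jy_pow j 0) p q = Jy_pow j (p + q)"
  unfolding Mpq_def by (simp add: mm_id_right supp_Jy_pow Jy_pow_add)

lemma Es_add: "mm j (Es j s) (Es j t) = Es j (s + t)"
proof (intro ext)
  fix a b
  have "mm j (Es j s) (Es j t) a b = mm j (mm j (Es j s) (Jy_pow j 0)) (Es j t) a b"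
    by (simp add: mm_id_right supp_Es)
  also have "\<dots> = (\<Sum>n. \<Sum>p\<le>n. w s p * w t (n - p) * Jy_pow j n a b)"
    unfolding triple Mpq_def[symmetric] Mpq_id by simp
  also have "\<dots> = (\<Sum>n. w (s + t) n * Jy_pow j n a b)"
  proof (intro arg_cong[where f=suminf] ext)
    fix n
    have "(\<Sum>p\<le>n. w s p * w t (n - p) * Jy_pow j n a b) =
          (\<Sum>p\<le>n. of_nat (n choose p) * (- \<i> * complex_of_real s) ^ p * (- \<i> * complex_of_real t) ^ (n - p)) / of_nat (fact n) * Jy_pow j n a b"
      by (simp add: w_coef sum_distrib_right sum_divide_distrib)
    also have "\<dots> = w (s + t) n * Jy_pow j n a b"
      unfolding binomial_ring[symmetric] w_def by (simp add: algebra_simps)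
    finally show "(\<Sum>p\<le>n. w s p * w t (n - p) * Jy_pow j n a b) = w (s + t) n * Jy_pow j n a b" .
  qed
  also have "\<dots> = Es j (s + t) a b"
    by (simp add: Es_def wigner_d_w)
  finally show "mm j (Es j s) (Es j t) a b = Es j (s + t) a b" .
qed

lemma Es_0: "Es j 0 = Jy_pow j 0"
proof (intro ext)
  fix a b
  have "Es j 0 a b = (\<Sum>n\<in>{0}. w 0 n * Jy_pow j n a b)"
    unfolding Es_def wigner_d_w by (rule suminf_finite) (auto simp: w_def)
  then show "Es j 0 a b = Jy_pow j 0 a b" by (simp add: w_def)
qed

lemma Es_inv: "mm j (Es j t) (Es j (- t)) = Jy_pow j 0"
  by (simp add: Es_add Es_0)

lemma Es_cnj: "cnj (Es j t a b) = Es j (- t) b a"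
proof -
  have "(\<lambda>n. cnj (w t n * Jy_pow j n a b)) sums cnj (Es j t a b)"
    unfolding sums_cnj Es_def wigner_d_w by (rule summable_sums[OF summable_wP(1)])
  moreover have "cnj (w t n * Jy_pow j n a b) = w (- t) n * Jy_pow j n b a" for n
    by (simp add: w_def Jy_pow_herm)
  ultimately show ?thesis
    by (simp add: Es_def wigner_d_w sums_iff)
qed

lemma conjugation:
  "mm j (mm j (Es j (- t)) A) (Es j t) a b = (\<Sum>n. complex_of_real t ^ n / of_nat (fact n) * Dm j A n a b)"
  unfolding triple
proof (intro arg_cong[where f=suminf] ext)
  fix n
  have "(\<Sum>p\<le>n. w (- t) p * w t (n - p) * mm j (mm j (Jy_pow j p) A) (Jy_pow j (n - p)) a b) =
        (\<Sum>p\<le>n. complex_of_real t ^ n / of_nat (fact n) * (of_nat (n choose p) * (\<i> ^ p * (- \<i>) ^ (n - p) * Mpq j A p (n - p) a b)))"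
  proof (intro sum.cong refl)
    fix p assume "p \<in> {..n}"
    then have pn: "p \<le> n" by simp
    have tp: "complex_of_real t ^ n = complex_of_real t ^ p * complex_of_real t ^ (n - p)"
      using pn by (simp add: power_add[symmetric])
    have mi: "(- (\<i> * x)) ^ k = (- \<i>) ^ k * x ^ k" for x :: complex and k
      by (metis minus_mult_left power_mult_distrib)
    show "w (- t) p * w t (n - p) * mm j (mm j (Jy_pow j p) A) (Jy_pow j (n - p)) a b =
        complex_of_real t ^ n / of_nat (fact n) * (of_nat (n choose p) * (\<i> ^ p * (- \<i>) ^ (n - p) * Mpq j A p (n - p) a b))"
      unfolding w_coef[OF pn] tp Mpq_def by (simp add: power_mult_distrib mi algebra_simps)
  qed
  then show "(\<Sum>p\<le>n. w (- t) p * w t (n - p) * mm j (mm j (Jy_pow j p) A) (Jy_pow j (n - p)) a b) =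
        complex_of_real t ^ n / of_nat (fact n) * Dm j A n a b"
    by (simp add: Dm_def sum_distrib_left)
qed


definition Zm :: "nat \<Rightarrow> cmat" where
  "Zm j = (\<lambda>a b. if a \<in> mrange j \<and> a = b then of_int a else 0)"

definition Xm :: "nat \<Rightarrow> cmat" where
  "Xm j = (\<lambda>a b. \<i> * of_int (a - b) * Jy j a b)"

lemma supp_Zm: "supp j (Zm j)" by (auto simp: supp_def Zm_def)
lemma supp_Xm: "supp j (Xm j)" by (auto simp: supp_def Xm_def Jy_out)

lemma mm_Zm_right: "mm j A (Zm j) a b = (if b \<in> mrange j then A a b * of_int b else 0)"
proof -
  have "mm j A (Zm j) a b = (\<Sum>k\<in>mrange j. if k = b then (if b \<in> mrange j then A a b * of_int b else 0) else 0)"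
    unfolding mm_def Zm_def by (rule sum.cong) auto
  then show ?thesis by simp
qed

lemma mm_Zm_left: "mm j (Zm j) A a b = (if a \<in> mrange j then of_int a * A a b else 0)"
proof -
  have "mm j (Zm j) A a b = (\<Sum>k\<in>mrange j. if k = a then (if a \<in> mrange j then of_int a * A a b else 0) else 0)"
    unfolding mm_def Zm_def by (rule sum.cong) auto
  then show ?thesis by simp
qed

lemma ad_Zm: "ad j (Zm j) = (\<lambda>a b. - Xm j a b)"
  by (intro ext) (auto simp: ad_def mm_Zm_right mm_Zm_left Xm_def Jy_out algebra_simps)

lemma Jy_zero: "a \<noteq> k + 1 \<Longrightarrow> a \<noteq> k - 1 \<Longrightarrow> Jy j a k = 0"
  by (simp add: Jy_def)

lemma sum_two:
  assumes "\<And>k. k \<notin> mrange j \<Longrightarrow> f k = 0" "\<And>k. k \<noteq> x \<Longrightarrow> k \<noteq> y \<Longrightarrow> f k = 0" "x \<noteq> y"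
  shows "(\<Sum>k\<in>mrange j. f k) = f x + f y"
proof -
  have "(\<Sum>k\<in>mrange j. f k) = (\<Sum>k\<in>mrange j \<union> {x, y}. f k)"
    by (rule sum.mono_neutral_left) (use assms in auto)
  also have "\<dots> = (\<Sum>k\<in>{x, y}. f k)"
    by (rule sum.mono_neutral_right) (use assms in auto)
  finally show ?thesis using assms(3) by simp
qed

lemma range_bounds:
  assumes "b \<in> mrange j"
  shows "real_of_int b * (real_of_int b + 1) \<le> real j * (real j + 1)"
    "real_of_int b * (real_of_int b - 1) \<le> real j * (real j + 1)"
    "0 \<le> real_of_int b * (real_of_int b + 1)" "0 \<le> real_of_int b * (real_of_int b - 1)"
proof -
  from assms have b: "- real j \<le> real_of_int b" "real_of_int b \<le> real j"
    by (auto simp: mrange_def)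
  define x where "x = real_of_int b"
  have ax: "\<bar>x\<bar> \<le> real j" using b by (auto simp: x_def)
  have e1: "x * (x + 1) \<le> \<bar>x\<bar> * (\<bar>x\<bar> + 1)"
    by (cases "x \<ge> 0") (auto simp: algebra_simps)
  have e2: "x * (x - 1) \<le> \<bar>x\<bar> * (\<bar>x\<bar> + 1)"
    by (cases "x \<ge> 0") (auto simp: algebra_simps)
  have e3: "\<bar>x\<bar> * (\<bar>x\<bar> + 1) \<le> real j * (real j + 1)"
    using ax by (intro mult_mono) auto
  show "real_of_int b * (real_of_int b + 1) \<le> real j * (real j + 1)"
    "real_of_int b * (real_of_int b - 1) \<le> real j * (real j + 1)"
    using e1 e2 e3 unfolding x_def by linarith+
  have "0 \<le> b * (b + 1)" by (cases "b \<ge> 0") (auto simp: mult_nonneg_nonneg mult_nonpos_nonpos)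
  then show "0 \<le> real_of_int b * (real_of_int b + 1)" by (metis of_int_0_le_iff of_int_1 of_int_add of_int_mult)
  have "0 \<le> b * (b - 1)" by (cases "b \<ge> 1") (auto simp: mult_nonneg_nonneg mult_nonpos_nonpos)
  then show "0 \<le> real_of_int b * (real_of_int b - 1)" by (metis of_int_0_le_iff of_int_1 of_int_diff of_int_mult)
qed

lemma Jy_prod_minus:
  assumes a: "a \<in> mrange j"
  shows "Jy j a (a - 1) * Jy j (a - 1) a = complex_of_real ((real j * (real j + 1) - real_of_int a * (real_of_int a - 1)) / 4)"
proof (cases "a - 1 \<in> mrange j")
  case True
  have nn: "0 \<le> real j * (real j + 1) - real_of_int a * (real_of_int a - 1)"
    using range_bounds(2)[OF a] by simp
  have "Jy j a (a - 1) * Jy j (a - 1) a =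
    complex_of_real (sqrt (real j * (real j + 1) - real_of_int a * (real_of_int a - 1))) *
    complex_of_real (sqrt (real j * (real j + 1) - real_of_int a * (real_of_int a - 1))) / 4"
    using a True by (simp add: Jy_def algebra_simps)
  also have "\<dots> = complex_of_real ((real j * (real j + 1) - real_of_int a * (real_of_int a - 1)) / 4)"
    unfolding of_real_mult[symmetric] real_sqrt_mult_self[symmetric] using nn by simp
  finally show ?thesis .
next
  case False
  then have "a = - int j" using a by (auto simp: mrange_def)
  then show ?thesis using False by (simp add: Jy_out algebra_simps)
qed

lemma Jy_prod_plus:
  assumes a: "a \<in> mrange j"
  shows "Jy j a (a + 1) * Jy j (a + 1) a = complex_of_real ((real j * (real j + 1) - real_of_int a * (real_of_int a + 1)) / 4)"
proof (cases "a + 1 \<in> mrange j")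
  case True
  have nn: "0 \<le> real j * (real j + 1) - real_of_int a * (real_of_int a + 1)"
    using range_bounds(1)[OF a] by simp
  have "Jy j a (a + 1) * Jy j (a + 1) a =
    complex_of_real (sqrt (real j * (real j + 1) - real_of_int a * (real_of_int a + 1))) *
    complex_of_real (sqrt (real j * (real j + 1) - real_of_int a * (real_of_int a + 1))) / 4"
    using a True by (simp add: Jy_def algebra_simps)
  also have "\<dots> = complex_of_real ((real j * (real j + 1) - real_of_int a * (real_of_int a + 1)) / 4)"
    unfolding of_real_mult[symmetric] real_sqrt_mult_self[symmetric] using nn by simp
  finally show ?thesis .
next
  case False
  then have "a = int j" using a by (auto simp: mrange_def)
  then show ?thesis using False by (simp add: Jy_out algebra_simps)
qed


lemma ad_Xm: "ad j (Xm j) = Zm j"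
proof (intro ext)
  fix a b
  define f where "f k = complex_of_int (2 * k - a - b) * (Jy j a k * Jy j k b)" for k
  have "ad j (Xm j) a b = (\<Sum>k\<in>mrange j. \<i> * (Jy j a k * (\<i> * of_int (k - b) * Jy j k b) - \<i> * of_int (a - k) * Jy j a k * Jy j k b))"
    unfolding ad_def mm_def Xm_def by (simp only: sum_subtractf[symmetric] sum_distrib_left)
  also have "\<dots> = (\<Sum>k\<in>mrange j. - f k)"
    by (rule sum.cong) (simp_all add: f_def algebra_simps)
  also have "\<dots> = - (\<Sum>k\<in>mrange j. f k)"
    by (simp add: sum_negf)
  also have "(\<Sum>k\<in>mrange j. f k) = f (a - 1) + f (a + 1)"
    by (rule sum_two) (auto simp: f_def Jy_out Jy_zero)
  also have "- (f (a - 1) + f (a + 1)) = Zm j a b"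
  proof (cases "a \<in> mrange j")
    case False
    then show ?thesis by (simp add: f_def Jy_out Zm_def)
  next
    case a: True
    consider "b = a" | "b = a + 2" | "b = a - 2" | "b \<noteq> a \<and> b \<noteq> a + 2 \<and> b \<noteq> a - 2" by blast
    then show ?thesis
    proof cases
      case 1
      have "- (f (a - 1) + f (a + 1)) = 2 * (Jy j a (a - 1) * Jy j (a - 1) a) - 2 * (Jy j a (a + 1) * Jy j (a + 1) a)"
        unfolding f_def 1 by (simp add: algebra_simps)
      also have "\<dots> = of_int a"
      proof -
        have "2 * ((real j * (real j + 1) - real_of_int a * (real_of_int a - 1)) / 4) -
              2 * ((real j * (real j + 1) - real_of_int a * (real_of_int a + 1)) / 4) = real_of_int a"
          by (simp add: field_simps)
        then have "complex_of_real (2 * ((real j * (real j + 1) - real_of_int a * (real_of_int a - 1)) / 4) -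
              2 * ((real j * (real j + 1) - real_of_int a * (real_of_int a + 1)) / 4)) = of_int a"
          by simp
        then show ?thesis
          unfolding Jy_prod_minus[OF a] Jy_prod_plus[OF a] by simp
      qed
      finally show ?thesis using a 1 by (simp add: Zm_def)
    next
      case 2
      then show ?thesis by (simp add: f_def Zm_def Jy_zero)
    next
      case 3
      then show ?thesis by (simp add: f_def Zm_def Jy_zero)
    next
      case 4
      then show ?thesis by (auto simp: f_def Zm_def Jy_zero)
    qed
  qed
  finally show "ad j (Xm j) a b = Zm j a b" .
qed


lemma ad_scal: "ad j (\<lambda>a b. c * B a b) = (\<lambda>a b. c * ad j B a b)"
  by (intro ext) (simp add: ad_def mm_scal_left mm_scal_right algebra_simps)

definition Kn :: "nat \<Rightarrow> nat \<Rightarrow> cmat" where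
  "Kn j n = (\<lambda>a b. if even n then (- 1) ^ (n div 2) * Zm j a b else (- 1) ^ (n div 2 + 1) * Xm j a b)"

lemma Dm_Zm: "Dm j (Zm j) n = Kn j n"
proof (induction n)
  case 0 then show ?case by (simp add: Dm_0 supp_Zm Kn_def)
next
  case (Suc n)
  show ?case
  proof (cases "even n")
    case True
    then have "Kn j n = (\<lambda>a b. (- 1) ^ (n div 2) * Zm j a b)" by (simp add: Kn_def)
    then show ?thesis using True
      by (simp add: Dm_Suc Suc ad_scal ad_Zm Kn_def)
  next
    case False
    then have "Kn j n = (\<lambda>a b. (- 1) ^ (n div 2 + 1) * Xm j a b)" by (simp add: Kn_def)
    moreover have "Suc n div 2 = n div 2 + 1" using False by presburger
    ultimately have "Dm j (Zm j) (Suc n) = (\<lambda>a b. (- 1) ^ (n div 2 + 1) * Zm j a b)"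
      by (simp only: Dm_Suc Suc ad_scal ad_Xm)
    moreover have "Kn j (Suc n) = (\<lambda>a b. (- 1) ^ (n div 2 + 1) * Zm j a b)"
      using False \<open>Suc n div 2 = n div 2 + 1\<close> by (simp add: Kn_def)
    ultimately show ?thesis by simp
  qed
qed

lemma Kn_series: "complex_of_real t ^ n / of_nat (fact n) * Kn j n a b =
   complex_of_real (cos_coeff n * t ^ n) * Zm j a b - complex_of_real (sin_coeff n * t ^ n) * Xm j a b"
proof (cases "even n")
  case True then show ?thesis by (simp add: Kn_def cos_coeff_def sin_coeff_def)
next
  case False
  then have "(n - Suc 0) div 2 = n div 2" by presburger
  then show ?thesis using False by (simp add: Kn_def cos_coeff_def sin_coeff_def)
qed

lemma Gm_formula:
  "mm j (mm j (Es j (- t)) (Zm j)) (Es j t) a b = complex_of_real (cos t) * Zm j a b - complex_of_real (sin t) * Xm j a b"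
proof -
  have c: "(\<lambda>n. complex_of_real (cos_coeff n * t ^ n) * Zm j a b) sums (complex_of_real (cos t) * Zm j a b)"
    by (intro sums_mult2 sums_of_real) (use cos_converges[of t] in simp)
  have s: "(\<lambda>n. complex_of_real (sin_coeff n * t ^ n) * Xm j a b) sums (complex_of_real (sin t) * Xm j a b)"
    by (intro sums_mult2 sums_of_real) (use sin_converges[of t] in simp)
  have "(\<lambda>n. complex_of_real t ^ n / of_nat (fact n) * Dm j (Zm j) n a b) sums
        (complex_of_real (cos t) * Zm j a b - complex_of_real (sin t) * Xm j a b)"
    unfolding Dm_Zm Kn_series by (rule sums_diff[OF c s])
  then show ?thesis unfolding conjugation by (rule sums_unique[symmetric])
qed


definition Zp :: "nat \<Rightarrow> nat \<Rightarrow> cmat" where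
  "Zp j k = (\<lambda>a b. if a \<in> mrange j \<and> a = b then of_int a ^ k else 0)"

lemma supp_Zp: "supp j (Zp j k)" by (auto simp: supp_def Zp_def)

lemma Zp_1: "Zp j 1 = Zm j" unfolding Zp_def Zm_def by (intro ext) auto

lemma mm_Zp_left: "mm j (Zp j k) A a b = (if a \<in> mrange j then of_int a ^ k * A a b else 0)"
proof -
  have "mm j (Zp j k) A a b = (\<Sum>l\<in>mrange j. if l = a then (if a \<in> mrange j then of_int a ^ k * A a b else 0) else 0)"
    unfolding mm_def Zp_def by (rule sum.cong) auto
  then show ?thesis by simp
qed

lemma mm_Zp_right: "mm j A (Zp j k) a b = (if b \<in> mrange j then A a b * of_int b ^ k else 0)"
proof -
  have "mm j A (Zp j k) a b = (\<Sum>l\<in>mrange j. if l = b then (if b \<in> mrange j then A a b * of_int b ^ k else 0) else 0)"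
    unfolding mm_def Zp_def by (rule sum.cong) auto
  then show ?thesis by simp
qed

lemma Zp_Suc: "mm j (Zp j k) (Zm j) = Zp j (Suc k)"
  by (intro ext) (simp only: mm_Zp_left, auto simp: Zm_def Zp_def)

definition Gk :: "nat \<Rightarrow> real \<Rightarrow> nat \<Rightarrow> cmat" where
  "Gk j t k = mm j (mm j (Es j (- t)) (Zp j k)) (Es j t)"

lemma Gk_Suc: "Gk j t (Suc k) = mm j (Gk j t k) (Gk j t 1)"
proof -
  have s1: "supp j (mm j (Zm j) (Es j t))" by (intro supp_mm supp_Zm supp_Es)
  have "mm j (Gk j t k) (Gk j t 1) =
        mm j (Es j (- t)) (mm j (Zp j k) (mm j (mm j (Es j t) (Es j (- t))) (mm j (Zm j) (Es j t))))"
    unfolding Gk_def Zp_1 by (simp add: mm_assoc)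
  also have "\<dots> = mm j (Es j (- t)) (mm j (mm j (Zp j k) (Zm j)) (Es j t))"
    unfolding Es_inv mm_id_left[OF s1] by (simp add: mm_assoc)
  also have "\<dots> = Gk j t (Suc k)"
    unfolding Zp_Suc Gk_def by (simp add: mm_assoc)
  finally show ?thesis by simp
qed

lemma moment_Gk:
  "complex_of_real (\<Sum>a\<in>mrange j. (cmod (Es j t a m))\<^sup>2 * real_of_int a ^ k) = Gk j t k m m"
proof -
  have "Gk j t k m m = (\<Sum>l\<in>mrange j. (if l \<in> mrange j then Es j (- t) m l * of_int l ^ k else 0) * Es j t l m)"
    unfolding Gk_def mm_def[of j "mm j _ _"] mm_Zp_right by simp
  also have "\<dots> = (\<Sum>l\<in>mrange j. complex_of_real ((cmod (Es j t l m))\<^sup>2 * real_of_int l ^ k))"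
  proof (rule sum.cong[OF refl])
    fix l assume "l \<in> mrange j"
    then show "(if l \<in> mrange j then Es j (- t) m l * of_int l ^ k else 0) * Es j t l m =
          complex_of_real ((cmod (Es j t l m))\<^sup>2 * real_of_int l ^ k)"
      by (simp add: Es_cnj[symmetric] complex_mult_cnj cmod_power2 mult_ac)
  qed
  finally show ?thesis by simp
qed

definition Gm :: "nat \<Rightarrow> real \<Rightarrow> cmat" where
  "Gm j t = (\<lambda>a b. complex_of_real (cos t) * Zm j a b - complex_of_real (sin t) * Xm j a b)"

lemma Gk_1: "Gk j t 1 = Gm j t"
  unfolding Gk_def Zp_1 Gm_def by (intro ext) (rule Gm_formula)

lemma Gk_2: "Gk j t 2 = mm j (Gm j t) (Gm j t)"
proof -
  have "Gk j t (Suc 1) = mm j (Gk j t 1) (Gk j t 1)" by (rule Gk_Suc)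
  then show ?thesis by (simp only: Suc_1 Gk_1)
qed

lemma Gk_3: "Gk j t 3 = mm j (mm j (Gm j t) (Gm j t)) (Gm j t)"
proof -
  have "Gk j t (Suc 2) = mm j (Gk j t 2) (Gk j t 1)" by (rule Gk_Suc)
  moreover have "Suc 2 = (3::nat)" by simp
  ultimately show ?thesis by (simp only: Gk_2 Gk_1)
qed

lemma Gk_4: "Gk j t 4 = mm j (mm j (Gm j t) (Gm j t)) (mm j (Gm j t) (Gm j t))"
proof -
  have "Gk j t (Suc 3) = mm j (Gk j t 3) (Gk j t 1)" by (rule Gk_Suc)
  moreover have "Suc 3 = (4::nat)" by simp
  ultimately have "Gk j t 4 = mm j (mm j (mm j (Gm j t) (Gm j t)) (Gm j t)) (Gm j t)"
    by (simp only: Gk_3 Gk_1)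
  then show ?thesis by (simp only: mm_assoc)
qed


definition xs :: "nat \<Rightarrow> int \<Rightarrow> real" where
  "xs j b = sqrt (real j * (real j + 1) - real_of_int b * (real_of_int b + 1)) / 2"

definition gr :: "real \<Rightarrow> real \<Rightarrow> nat \<Rightarrow> int \<Rightarrow> int \<Rightarrow> real" where
  "gr c s j a b = (if a \<in> mrange j \<and> b \<in> mrange j then
      (if a = b then c * real_of_int a else if a = b + 1 then - s * xs j b else if b = a + 1 then - s * xs j a else 0)
    else 0)"

lemma Xm_down: "Xm j (b + 1) b = (if b \<in> mrange j \<and> b + 1 \<in> mrange j then complex_of_real (xs j b) else 0)"
  unfolding Xm_def Jy_def xs_def by simp

lemma Xm_up: "Xm j a (a + 1) = (if a \<in> mrange j \<and> a + 1 \<in> mrange j then complex_of_real (xs j a) else 0)"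
proof -
  have e: "real_of_int (a + 1) * (real_of_int (a + 1) - 1) = real_of_int a * (real_of_int a + 1)"
    by (simp add: algebra_simps)
  show ?thesis unfolding Xm_def Jy_def xs_def by (simp add: e)
qed

lemma Xm_far: "a \<noteq> b + 1 \<Longrightarrow> b \<noteq> a + 1 \<Longrightarrow> Xm j a b = 0"
  unfolding Xm_def Jy_def by auto

lemma Gm_gr: "Gm j t a b = complex_of_real (gr (cos t) (sin t) j a b)"
proof -
  consider "a = b" | "a = b + 1" | "b = a + 1" | "a \<noteq> b \<and> a \<noteq> b + 1 \<and> b \<noteq> a + 1" by blast
  then show ?thesis
  proof cases
    case 1 then show ?thesis by (simp add: Gm_def gr_def Zm_def Xm_def)
  next
    case 2 then show ?thesis by (simp add: Gm_def gr_def Zm_def Xm_down)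
  next
    case 3 then show ?thesis by (simp add: Gm_def gr_def Zm_def Xm_up)
  next
    case 4 then show ?thesis by (simp add: Gm_def gr_def Zm_def Xm_far)
  qed
qed

definition rmm :: "nat \<Rightarrow> (int \<Rightarrow> int \<Rightarrow> real) \<Rightarrow> (int \<Rightarrow> int \<Rightarrow> real) \<Rightarrow> int \<Rightarrow> int \<Rightarrow> real" where
  "rmm j A B = (\<lambda>a b. \<Sum>k\<in>mrange j. A a k * B k b)"

lemma mm_of_real: "mm j (\<lambda>a b. complex_of_real (A a b)) (\<lambda>a b. complex_of_real (B a b)) = (\<lambda>a b. complex_of_real (rmm j A B a b))"
  by (simp add: mm_def rmm_def)

lemma Gm_real: "Gm j t = (\<lambda>a b. complex_of_real (gr (cos t) (sin t) j a b))"
  using Gm_gr by blast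

definition mom :: "nat \<Rightarrow> real \<Rightarrow> int \<Rightarrow> nat \<Rightarrow> real" where
  "mom j t m k = (\<Sum>a\<in>mrange j. (cmod (Es j t a m))\<^sup>2 * real_of_int a ^ k)"

lemma mom_eqs:
  fixes j :: nat and t :: real
  defines "g \<equiv> gr (cos t) (sin t) j"
  shows "mom j t m 1 = g m m"
    "mom j t m 2 = rmm j g g m m"
    "mom j t m 3 = rmm j (rmm j g g) g m m"
    "mom j t m 4 = rmm j (rmm j g g) (rmm j g g) m m"
proof -
  have G: "Gm j t = (\<lambda>a b. complex_of_real (g a b))" unfolding g_def by (rule Gm_real)
  have "complex_of_real (mom j t m 1) = complex_of_real (g m m)"
    unfolding mom_def moment_Gk Gk_1 G by simp
  then show "mom j t m 1 = g m m" by simp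
  have "complex_of_real (mom j t m 2) = complex_of_real (rmm j g g m m)"
    unfolding mom_def moment_Gk Gk_2 G mm_of_real by simp
  then show "mom j t m 2 = rmm j g g m m" by simp
  have "complex_of_real (mom j t m 3) = complex_of_real (rmm j (rmm j g g) g m m)"
    unfolding mom_def moment_Gk Gk_3 G mm_of_real by simp
  then show "mom j t m 3 = rmm j (rmm j g g) g m m" by simp
  have "complex_of_real (mom j t m 4) = complex_of_real (rmm j (rmm j g g) (rmm j g g) m m)"
    unfolding mom_def moment_Gk Gk_4 G mm_of_real by simp
  then show "mom j t m 4 = rmm j (rmm j g g) (rmm j g g) m m" by simp
qed

lemma mom_0: "m \<in> mrange j \<Longrightarrow> mom j t m 0 = 1"
proof -
  assume m: "m \<in> mrange j"
  have z: "Zp j 0 = Jy_pow j 0" by (intro ext) (auto simp: Zp_def Jy_pow_0)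
  have "complex_of_real (mom j t m 0) = Gk j t 0 m m" unfolding mom_def by (rule moment_Gk)
  also have "\<dots> = 1"
    unfolding Gk_def z mm_id_right[OF supp_Es] Es_add using m by (simp add: Es_0 Jy_pow_0)
  finally show ?thesis by simp
qed


lemma sum_sub:
  assumes "S \<subseteq> mrange j" "\<And>k. k \<in> mrange j \<Longrightarrow> k \<notin> S \<Longrightarrow> f k = 0"
  shows "(\<Sum>k\<in>mrange j. f k) = (\<Sum>k\<in>S. f k)"
  by (rule sum.mono_neutral_right) (use assms in auto)

lemma gr_far: "b \<noteq> a - 1 \<Longrightarrow> b \<noteq> a \<Longrightarrow> b \<noteq> a + 1 \<Longrightarrow> gr c s j a b = 0"
  unfolding gr_def by auto

context
  fixes c s :: real and j :: nat and m :: int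
  assumes lo: "m - 2 \<in> mrange j" and hi: "m + 2 \<in> mrange j"
begin

private lemma inR: "m - 2 \<in> mrange j" "m - 1 \<in> mrange j" "m \<in> mrange j" "m + 1 \<in> mrange j" "m + 2 \<in> mrange j"
  using lo hi by (auto simp: mrange_def)

private abbreviation "g \<equiv> gr c s j"

private lemma rmm_gg_right: "rmm j g g a m = (\<Sum>k\<in>{m-1, m, m+1}. g a k * g k m)"
  unfolding rmm_def by (rule sum_sub) (use inR in \<open>auto simp: gr_far[of m]\<close>)

private lemma rmm_gg_left: "rmm j g g m a = (\<Sum>k\<in>{m-1, m, m+1}. g m k * g k a)"
  unfolding rmm_def by (rule sum_sub) (use inR in \<open>auto simp: gr_far[of _ m]\<close>)

lemma mom2_formula: "rmm j g g m m = c^2 * (real_of_int m)^2 + s^2 * ((xs j (m-1))^2 + (xs j m)^2)"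
  unfolding rmm_gg_right using inR by (simp add: gr_def power2_eq_square algebra_simps)

lemma mom3_formula: "rmm j (rmm j g g) g m m = c^3 * (real_of_int m)^3 +
   c * s^2 * ((3 * real_of_int m + 1) * (xs j m)^2 + (3 * real_of_int m - 1) * (xs j (m-1))^2)"
proof -
  have "rmm j (rmm j g g) g m m = (\<Sum>a\<in>{m-1, m, m+1}. rmm j g g m a * g a m)"
    unfolding rmm_def[of j "rmm j g g"] by (rule sum_sub) (use inR in \<open>auto simp: gr_far[of m]\<close>)
  also have "\<dots> = c^3 * (real_of_int m)^3 +
   c * s^2 * ((3 * real_of_int m + 1) * (xs j m)^2 + (3 * real_of_int m - 1) * (xs j (m-1))^2)"
    unfolding rmm_gg_left using inR by (simp add: gr_def power2_eq_square power3_eq_cube algebra_simps)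
  finally show ?thesis .
qed

lemma mom4_formula: "rmm j (rmm j g g) (rmm j g g) m m =
   s^4 * (xs j (m+1))^2 * (xs j m)^2 + c^2 * s^2 * (xs j m)^2 * (2 * real_of_int m + 1)^2
   + (c^2 * (real_of_int m)^2 + s^2 * ((xs j (m-1))^2 + (xs j m)^2))^2
   + c^2 * s^2 * (xs j (m-1))^2 * (2 * real_of_int m - 1)^2 + s^4 * (xs j (m-2))^2 * (xs j (m-1))^2"
proof -
  have z: "rmm j g g m a = 0" if "a \<notin> {m-2, m-1, m, m+1, m+2}" for a
    unfolding rmm_gg_left using that by (auto simp: gr_far)
  have "rmm j (rmm j g g) (rmm j g g) m m = (\<Sum>a\<in>{m-2, m-1, m, m+1, m+2}. rmm j g g m a * rmm j g g a m)"
    unfolding rmm_def[of j "rmm j g g" "rmm j g g"] by (rule sum_sub) (use inR z in auto)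
  also have "\<dots> = s^4 * (xs j (m+1))^2 * (xs j m)^2 + c^2 * s^2 * (xs j m)^2 * (2 * real_of_int m + 1)^2
   + (c^2 * (real_of_int m)^2 + s^2 * ((xs j (m-1))^2 + (xs j m)^2))^2
   + c^2 * s^2 * (xs j (m-1))^2 * (2 * real_of_int m - 1)^2 + s^4 * (xs j (m-2))^2 * (xs j (m-1))^2"
    unfolding rmm_gg_left rmm_gg_right using inR by (simp add: gr_def power2_eq_square power4_eq_xxxx algebra_simps)
  finally show ?thesis .
qed

end


definition qpoly :: "real \<Rightarrow> real" where
  "qpoly y = 47/100 + 13/100 * y + 117/100 * y^2 - 47/50 * y^3 + 28/125 * y^4"

lemma sos_pos: "qpoly ( r^2) - r = (47/100::real) * ((1::real) * r^0 + (- 50/47::real) * r^1 + (- 89/94::real) * r^2 + (20/47::real) * r^3 + (31/94::real) * r^4)^2 + (1147/2350::real) * ((1::real) * r^1 + (- 3165/2294::real) * r^2 + (- 205/1147::real) * r^3 + (1151/2294::real) * r^4)^2 + (50277/458800::real) * ((1::real) * r^2 + (- 5044/50277::real) * r^3 + (- 25403/50277::real) * r^4)^2 + (48014/1256925::real) * ((1::real) * r^3 + (- 34871/48014::real) * r^4)^2 + (5656/3000875::real) * ((1::real) * r^4)^2"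
  unfolding qpoly_def by (simp add: algebra_simps power2_eq_square power3_eq_cube power4_eq_xxxx eval_nat_numeral)

lemma nonneg_pos: "0 \<le> qpoly ( r^2) - (r::real)"
  unfolding sos_pos by (intro add_nonneg_nonneg mult_nonneg_nonneg) auto

lemma sos_neg: "qpoly (- (r^2)) - r = (47/100::real) * ((1::real) * r^0 + (- 50/47::real) * r^1 + (- 163/94::real) * r^2 + (40/47::real) * r^3 + (7/94::real) * r^4)^2 + (91/94::real) * ((1::real) * r^1 + (- 1191/910::real) * r^2 + (- 4/5::real) * r^3 + (129/910::real) * r^4)^2 + (15597/36400::real) * ((1::real) * r^2 + (- 5096/5199::real) * r^3 + (- 6905/15597::real) * r^4)^2 + (18557/43325::real) * ((1::real) * r^3 + (- 27539/111342::real) * r^4)^2 + (851349/9278500::real) * ((1::real) * r^4)^2"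
  unfolding qpoly_def by (simp add: algebra_simps power2_eq_square power3_eq_cube power4_eq_xxxx eval_nat_numeral)

lemma nonneg_neg: "0 \<le> qpoly (- (r^2)) - (r::real)"
  unfolding sos_neg by (intro add_nonneg_nonneg mult_nonneg_nonneg) auto

lemma qpoly_ge: "sqrt \<bar>y\<bar> \<le> qpoly y"
proof (cases "y \<ge> 0")
  case True
  then have "y = (sqrt \<bar>y\<bar>)^2" by simp
  then show ?thesis using nonneg_pos[of "sqrt \<bar>y\<bar>"] by simp
next
  case False
  then have "y = - ((sqrt \<bar>y\<bar>)^2)" by simp
  then show ?thesis using nonneg_neg[of "sqrt \<bar>y\<bar>"] by simp
qed


lemma Msat_le: "Msat j a \<le> real_of_int \<bar>a\<bar>" by (simp add: Msat_def)
lemma Msat_nonneg: "0 \<le> Msat j a" by (simp add: Msat_def)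

lemma Msat_m: "1 \<le> m \<Longrightarrow> real_of_int m \<le> sqrt (real j) \<Longrightarrow> Msat j m = real_of_int m"
  by (simp add: Msat_def)

lemma step1:
  assumes m1: "1 \<le> m" and ms: "real_of_int m \<le> sqrt (real j)"
  shows "lemma3_sum (1/2) j m \<le> (\<Sum>a\<in>mrange j. (cmod (Es j (arcsin (real_of_int m / real j)) a m))\<^sup>2 * qpoly (real_of_int a / real_of_int m))"
  unfolding lemma3_sum_def
proof (rule sum_mono)
  fix a assume "a \<in> mrange j"
  define e where "e = (cmod (wigner_d j a m (arcsin (real_of_int m / real j))))\<^sup>2"
  have e0: "0 \<le> e" by (simp add: e_def)
  have mpos: "0 < real_of_int m" using m1 by simp
  have "Msat j a powr (1/2) / Msat j m powr (1/2) \<le> real_of_int \<bar>a\<bar> powr (1/2) / real_of_int m powr (1/2)"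
    unfolding Msat_m[OF m1 ms]
    by (intro divide_right_mono powr_mono2 Msat_le Msat_nonneg) auto
  also have "\<dots> = sqrt \<bar>real_of_int a / real_of_int m\<bar>"
    using mpos by (simp add: powr_half_sqrt real_sqrt_divide)
  also have "\<dots> \<le> qpoly (real_of_int a / real_of_int m)" by (rule qpoly_ge)
  finally have "Msat j a powr (1/2) / Msat j m powr (1/2) \<le> qpoly (real_of_int a / real_of_int m)" .
  then have "e * (Msat j a powr (1/2) / Msat j m powr (1/2)) \<le> e * qpoly (real_of_int a / real_of_int m)"
    by (rule mult_left_mono[OF _ e0])
  then show "e * Msat j a powr (1/2) / Msat j m powr (1/2) \<le>
      (cmod (Es j (arcsin (real_of_int m / real j)) a m))\<^sup>2 * qpoly (real_of_int a / real_of_int m)"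
    by (simp add: e_def Es_def)
qed

lemma step2:
  assumes "m \<noteq> 0"
  shows "(\<Sum>a\<in>mrange j. (cmod (Es j t a m))\<^sup>2 * qpoly (real_of_int a / real_of_int m)) =
    47/100 * mom j t m 0 + 13/100 * (mom j t m 1 / real_of_int m) + 117/100 * (mom j t m 2 / real_of_int m ^ 2)
    - 47/50 * (mom j t m 3 / real_of_int m ^ 3) + 28/125 * (mom j t m 4 / real_of_int m ^ 4)"
  unfolding qpoly_def mom_def
  by (simp add: sum_distrib_left sum_distrib_right sum.distrib sum_subtractf sum_divide_distrib power_divide algebra_simps)


definition V :: "nat \<Rightarrow> int \<Rightarrow> real" where
  "V j b = (xs j b)^2 / (real j)^2"

definition Qexpr :: "nat \<Rightarrow> int \<Rightarrow> real \<Rightarrow> real" where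
  "Qexpr j m c = 47/100 + 13/100 * c + 117/100 * (c^2 + V j (m-1) + V j m)
    - 47/50 * (c^3 + c * ((3 + 1 / real_of_int m) * V j m + (3 - 1 / real_of_int m) * V j (m-1)))
    + 28/125 * (V j (m+1) * V j m + c^2 * V j m * (2 + 1 / real_of_int m)^2 + (c^2 + V j (m-1) + V j m)^2
       + c^2 * V j (m-1) * (2 - 1 / real_of_int m)^2 + V j (m-2) * V j (m-1))"

lemma step3:
  assumes m1: "1 \<le> m" and ms: "real_of_int m \<le> sqrt (real j)" and mj: "m + 2 \<le> int j"
  defines "t \<equiv> arcsin (real_of_int m / real j)"
  shows "47/100 * mom j t m 0 + 13/100 * (mom j t m 1 / real_of_int m) + 117/100 * (mom j t m 2 / real_of_int m ^ 2)
    - 47/50 * (mom j t m 3 / real_of_int m ^ 3) + 28/125 * (mom j t m 4 / real_of_int m ^ 4) = Qexpr j m (cos t)"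
proof -
  have lo: "m - 2 \<in> mrange j" and hi: "m + 2 \<in> mrange j" and mR: "m \<in> mrange j"
    using m1 mj by (auto simp: mrange_def)
  have jpos: "0 < real j" using m1 mj by simp
  have mpos: "0 < real_of_int m" using m1 by simp
  have mle: "real_of_int m \<le> real j" using mj by simp
  have s: "sin t = real_of_int m / real j"
    unfolding t_def using mle mpos jpos by (intro sin_arcsin) (auto simp: field_simps)
  define c where "c = cos t"
  define M where "M = real_of_int m"
  have Mpos: "0 < M" using mpos by (simp add: M_def)
  have h1: "mom j t m 1 / M = c"
    using mom_eqs(1)[of j t m] mpos by (simp add: gr_def mR c_def M_def)
  have h2: "mom j t m 2 / M ^ 2 = c^2 + V j (m-1) + V j m"
    unfolding mom_eqs mom2_formula[OF lo hi] s V_def M_def[symmetric] c_def[symmetric]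
    using Mpos jpos by (simp add: field_simps)
  have h3: "mom j t m 3 / M ^ 3 = c^3 + c * ((3 + 1 / M) * V j m + (3 - 1 / M) * V j (m-1))"
    unfolding mom_eqs mom3_formula[OF lo hi] s V_def M_def[symmetric] c_def[symmetric]
    using Mpos jpos by (simp add: field_simps) (simp add: algebra_simps power2_eq_square power3_eq_cube)
  have h4: "mom j t m 4 / M ^ 4 = V j (m+1) * V j m + c^2 * V j m * (2 + 1 / M)^2 + (c^2 + V j (m-1) + V j m)^2
       + c^2 * V j (m-1) * (2 - 1 / M)^2 + V j (m-2) * V j (m-1)"
    unfolding mom_eqs mom4_formula[OF lo hi] s V_def M_def[symmetric] c_def[symmetric]
    using Mpos jpos by (simp add: field_simps) (simp add: algebra_simps power2_eq_square eval_nat_numeral)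
  show ?thesis
    using h1 h2 h3 h4 mom_0[OF mR, of t]
    unfolding Qexpr_def M_def c_def by simp
qed


lemma Qexpr_tendsto:
  fixes mm :: "nat \<Rightarrow> int" and cf :: "nat \<Rightarrow> real"
  assumes c: "(cf \<longlongrightarrow> 1) sequentially"
    and v2: "((\<lambda>j. V j (mm j - 2)) \<longlongrightarrow> 1/4) sequentially"
    and v1: "((\<lambda>j. V j (mm j - 1)) \<longlongrightarrow> 1/4) sequentially"
    and v0: "((\<lambda>j. V j (mm j)) \<longlongrightarrow> 1/4) sequentially"
    and vp: "((\<lambda>j. V j (mm j + 1)) \<longlongrightarrow> 1/4) sequentially"
    and i: "((\<lambda>j. 1 / real_of_int (mm j)) \<longlongrightarrow> 0) sequentially"
  shows "((\<lambda>j. Qexpr j (mm j) (cf j)) \<longlongrightarrow> 197/200) sequentially"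
proof -
  have lim: "((\<lambda>j. Qexpr j (mm j) (cf j)) \<longlongrightarrow>
     (47/100 + 13/100 * 1 + 117/100 * (1^2 + 1/4 + 1/4) - 47/50 * (1^3 + 1 * ((3 + 0) * (1/4) + (3 - 0) * (1/4)))
      + 28/125 * (1/4 * (1/4) + 1^2 * (1/4) * (2 + 0)^2 + (1^2 + 1/4 + 1/4)^2 + 1^2 * (1/4) * (2 - 0)^2 + 1/4 * (1/4)))) sequentially"
    unfolding Qexpr_def by (intro tendsto_intros c v2 v1 v0 vp i)
  have L: "(47/100 + 13/100 * 1 + 117/100 * (1^2 + 1/4 + 1/4) - 47/50 * (1^3 + 1 * ((3 + 0) * (1/4) + (3 - 0) * (1/4)))
      + 28/125 * (1/4 * (1/4) + 1^2 * (1/4) * (2 + 0)^2 + (1^2 + 1/4 + 1/4)^2 + 1^2 * (1/4) * (2 - 0)^2 + 1/4 * (1/4)) :: real) = 197/200"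
    by (simp add: power2_eq_square)
  show ?thesis using lim unfolding L .
qed

lemma V_eq:
  assumes "\<bar>b\<bar> \<le> int j" "0 < j"
  shows "V j b = (1 + 1 / real j) / 4 - real_of_int b * (real_of_int b + 1) / (4 * (real j)^2)"
proof -
  have "b \<in> mrange j" using assms by (auto simp: mrange_def)
  from range_bounds(1)[OF this] have nn: "0 \<le> real j * (real j + 1) - real_of_int b * (real_of_int b + 1)" by simp
  show ?thesis
    unfolding V_def xs_def using nn assms(2)
    by (simp add: power_divide field_simps power2_eq_square)
qed

lemma sqrt_bound: "(\<lambda>j. (sqrt (real j) + 2) * (sqrt (real j) + 3) / (real j)^2) \<longlonglongrightarrow> 0"
  by real_asymp

lemma inv_sqrt: "(\<lambda>j. 1 / sqrt (real j)) \<longlonglongrightarrow> 0"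
  by real_asymp


lemma sqrt_half: assumes "4 \<le> j" shows "2 * sqrt (real j) \<le> real j"
proof -
  have "sqrt 4 \<le> sqrt (real j)" using assms by (intro real_sqrt_le_mono) simp
  then have s2: "2 \<le> sqrt (real j)" by simp
  have "2 * sqrt (real j) \<le> sqrt (real j) * sqrt (real j)"
    using s2 by (intro mult_right_mono) auto
  also have "\<dots> = real j" by simp
  finally show ?thesis .
qed

lemma V_tendsto:
  fixes m :: "nat \<Rightarrow> int" and r :: int
  assumes mt: "filterlim m at_top sequentially"
    and ms: "\<forall>\<^sub>F j in sequentially. real_of_int (m j) \<le> sqrt (real j)"
    and r: "-2 \<le> r" "r \<le> 1"
  shows "((\<lambda>j. V j (m j + r)) \<longlongrightarrow> 1/4) sequentially"
proof -
  define b where "b j = m j + r" for j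
  have e3: "\<forall>\<^sub>F j in sequentially. 3 \<le> m j" using mt by (simp add: filterlim_at_top)
  have ej: "\<forall>\<^sub>F j in sequentially. 4 \<le> j" by (rule eventually_ge_at_top)
  have ev: "\<forall>\<^sub>F j in sequentially. 1 \<le> b j \<and> real_of_int (b j) \<le> sqrt (real j) + 1 \<and> b j \<le> int j \<and> 0 < j"
    using e3 ej ms
  proof eventually_elim
    case (elim j)
    have "2 * sqrt (real j) \<le> real j" using sqrt_half elim(2) by blast
    moreover have "0 \<le> sqrt (real j)" by simp
    ultimately have "real_of_int (m j) + 1 \<le> real j" using elim by linarith
    then have "m j + 1 \<le> int j" by linarith
    then show ?case using elim r unfolding b_def by auto
  qed
  have eqV: "\<forall>\<^sub>F j in sequentially. V j (b j) = (1 + 1 / real j) / 4 - real_of_int (b j) * (real_of_int (b j) + 1) / (4 * (real j)^2)"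
    using ev by eventually_elim (rule V_eq; auto)
  have lo: "\<forall>\<^sub>F j in sequentially. 0 \<le> real_of_int (b j) * (real_of_int (b j) + 1) / (4 * (real j)^2)"
    using ev by eventually_elim auto
  have hi: "\<forall>\<^sub>F j in sequentially. real_of_int (b j) * (real_of_int (b j) + 1) / (4 * (real j)^2) \<le>
            (sqrt (real j) + 2) * (sqrt (real j) + 3) / (real j)^2"
    using ev
  proof eventually_elim
    case (elim j)
    have "real_of_int (b j) * (real_of_int (b j) + 1) \<le> (sqrt (real j) + 2) * (sqrt (real j) + 3)"
      using elim by (intro mult_mono) auto
    then have "real_of_int (b j) * (real_of_int (b j) + 1) / (4 * (real j)^2) \<le> (sqrt (real j) + 2) * (sqrt (real j) + 3) / (4 * (real j)^2)"
      by (intro divide_right_mono) auto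
    also have "\<dots> \<le> (sqrt (real j) + 2) * (sqrt (real j) + 3) / (real j)^2"
      using elim by (intro divide_left_mono) auto
    finally show ?case .
  qed
  have z: "((\<lambda>j. real_of_int (b j) * (real_of_int (b j) + 1) / (4 * (real j)^2)) \<longlongrightarrow> 0) sequentially"
    by (rule tendsto_sandwich[OF lo hi tendsto_const sqrt_bound])
  have inv: "((\<lambda>j. 1 / real j) \<longlongrightarrow> 0) sequentially" by real_asymp
  have "((\<lambda>j. (1 + 1 / real j) / 4 - real_of_int (b j) * (real_of_int (b j) + 1) / (4 * (real j)^2)) \<longlongrightarrow> (1 + 0) / 4 - 0) sequentially"
    by (intro tendsto_intros inv z) simp
  then have "((\<lambda>j. (1 + 1 / real j) / 4 - real_of_int (b j) * (real_of_int (b j) + 1) / (4 * (real j)^2)) \<longlongrightarrow> 1/4) sequentially"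
    by simp
  then have "((\<lambda>j. V j (b j)) \<longlongrightarrow> 1/4) sequentially"
    by (rule Lim_transform_eventually) (use eqV in \<open>auto elim: eventually_mono\<close>)
  then show ?thesis by (simp add: b_def)
qed

theorem lemma3:
  shows "\<exists>c \<alpha>. c < 1 \<and> 0 < \<alpha> \<and> \<alpha> < 1 \<and>
    (\<forall>m :: nat \<Rightarrow> int.
       filterlim m at_top sequentially \<longrightarrow>
       (\<forall>\<^sub>F j in sequentially. real_of_int (m j) \<le> sqrt (real j)) \<longrightarrow>
       (\<forall>\<^sub>F j in sequentially. lemma3_sum \<alpha> j (m j) < c))"
proof -
  have main: "\<forall>\<^sub>F j in sequentially. lemma3_sum (1/2) j (m j) < 99/100"
    if mt: "filterlim m at_top sequentially"
    and ms: "\<forall>\<^sub>F j in sequentially. real_of_int (m j) \<le> sqrt (real j)" for m :: "nat \<Rightarrow> int"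
  proof -
  define M where "M j = real_of_int (m j)" for j
  have e3: "\<forall>\<^sub>F j in sequentially. 3 \<le> m j" using mt by (simp add: filterlim_at_top)
  have ej: "\<forall>\<^sub>F j in sequentially. 4 \<le> j" by (rule eventually_ge_at_top)
  have Mt: "filterlim M at_top sequentially"
    unfolding M_def by (rule filterlim_compose[OF filterlim_real_of_int_at_top mt])
  have iM: "((\<lambda>j. 1 / real_of_int (m j)) \<longlongrightarrow> 0) sequentially"
    using tendsto_inverse_0_at_top[OF Mt] by (simp add: M_def inverse_eq_divide)
  have slo: "\<forall>\<^sub>F j in sequentially. 0 \<le> M j / real j"
    using e3 by eventually_elim (simp add: M_def)
  have shi: "\<forall>\<^sub>F j in sequentially. M j / real j \<le> 1 / sqrt (real j)"
    using ms ej
  proof eventually_elim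
    case (elim j)
    then have "M j / real j \<le> sqrt (real j) / real j" unfolding M_def
      by (intro divide_right_mono) auto
    also have "\<dots> = 1 / sqrt (real j)"
      by (simp add: sqrt_divide_self_eq inverse_eq_divide)
    finally show ?case .
  qed
  have s0: "((\<lambda>j. M j / real j) \<longlongrightarrow> 0) sequentially"
    by (rule tendsto_sandwich[OF slo shi tendsto_const inv_sqrt])
  have cont: "isCont (\<lambda>x. cos (arcsin x)) 0"
    by (intro continuous_intros isCont_arcsin) auto
  have c1: "((\<lambda>j. cos (arcsin (M j / real j))) \<longlongrightarrow> 1) sequentially"
    using isCont_tendsto_compose[OF cont s0] by simp
  have v2: "((\<lambda>j. V j (m j - 2)) \<longlongrightarrow> 1/4) sequentially"
    using V_tendsto[OF mt ms, of "-2"] by simp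
  have v1: "((\<lambda>j. V j (m j - 1)) \<longlongrightarrow> 1/4) sequentially"
    using V_tendsto[OF mt ms, of "-1"] by simp
  have v0: "((\<lambda>j. V j (m j)) \<longlongrightarrow> 1/4) sequentially"
    using V_tendsto[OF mt ms, of 0] by simp
  have vp: "((\<lambda>j. V j (m j + 1)) \<longlongrightarrow> 1/4) sequentially"
    using V_tendsto[OF mt ms, of 1] by simp
  have Q: "((\<lambda>j. Qexpr j (m j) (cos (arcsin (M j / real j)))) \<longlongrightarrow> 197/200) sequentially"
    by (rule Qexpr_tendsto[OF c1 v2 v1 v0 vp iM])
  have Qlt: "\<forall>\<^sub>F j in sequentially. Qexpr j (m j) (cos (arcsin (M j / real j))) < 99/100"
    by (rule order_tendstoD(2)[OF Q]) simp
  show ?thesis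
    using e3 ej ms Qlt
  proof eventually_elim
    case (elim j)
    have m1: "1 \<le> m j" using elim by simp
    have "2 * sqrt (real j) \<le> real j" using sqrt_half elim(2) by blast
    moreover have "0 \<le> sqrt (real j)" by simp
    ultimately have "real_of_int (m j) + 2 \<le> real j" using elim by linarith
    then have mj: "m j + 2 \<le> int j" by linarith
    have "lemma3_sum (1/2) j (m j) \<le> Qexpr j (m j) (cos (arcsin (M j / real j)))"
      using step1[OF m1 elim(3)] step2[of "m j" j] step3[OF m1 elim(3) mj] m1
      unfolding M_def by simp
    then show ?case using elim(4) by linarith
  qed
qed

  show ?thesis by (intro exI[of _ "99/100"] exI[of _ "1/2"] conjI allI impI main) simp_all
qed


end
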